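(* Let $m,n\ge 3$ be integers and fix a vertex $u$ of ${\rm SR}(m,n)$. Then every neighbour $v$ of $u$ lies in at most two maximal cliques of the subgraph induced on the set of neighbours of $u$ (equivalently, in at most two maximal cliques of ${\rm SR}(m,n)$ containing both $u$ and $v$) if and only if $u$ has exactly one nonzero coordinate.
   Context: ${\rm SR}(m,n)$ is the graph whose vertices are the vectors in $\{0,1,2,\dots\}^m$ with coordinate sum $n$, two vertices being adjacent when they differ in precisely two coordinate positions. *)

theory Defs
  imports Main
begin

text \<open>Vertices of SR(m,n): vectors in nat^m (coordinates indexed by 0..m-1,
  represented as functions nat => nat that vanish outside {..<m}) with coordinate sum n.\<close>
definition SR_verts :: "nat \<Rightarrow> nat \<Rightarrow> (nat \<Rightarrow> nat) set" where
  "SR_verts m n = {x. (\<forall>i\<ge>m. x i = 0) \<and> (\<Sum>i<m. x i) = n}"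

definition SR_adj :: "nat \<Rightarrow> (nat \<Rightarrow> nat) \<Rightarrow> (nat \<Rightarrow> nat) \<Rightarrow> bool" where
  "SR_adj m x y \<longleftrightarrow> card {i. i < m \<and> x i \<noteq> y i} = 2"

definition SR_nbrs :: "nat \<Rightarrow> nat \<Rightarrow> (nat \<Rightarrow> nat) \<Rightarrow> (nat \<Rightarrow> nat) set" where
  "SR_nbrs m n u = {v \<in> SR_verts m n. SR_adj m u v}"

definition is_clique_in :: "('a \<Rightarrow> 'a \<Rightarrow> bool) \<Rightarrow> 'a set \<Rightarrow> 'a set \<Rightarrow> bool" where
  "is_clique_in E S C \<longleftrightarrow> C \<subseteq> S \<and> (\<forall>x\<in>C. \<forall>y\<in>C. x \<noteq> y \<longrightarrow> E x y)"

definition is_max_clique_in :: "('a \<Rightarrow> 'a \<Rightarrow> bool) \<Rightarrow> 'a set \<Rightarrow> 'a set \<Rightarrow> bool" where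
  "is_max_clique_in E S C \<longleftrightarrow> is_clique_in E S C \<and>
     (\<forall>D. is_clique_in E S D \<and> C \<subseteq> D \<longrightarrow> D = C)"

end

theory Submission
  imports Defs
begin

lemma finite_SR_verts: "finite (SR_verts m n)"
proof -
  have "SR_verts m n \<subseteq> {f. \<forall>x. (x \<in> {..<m} \<longrightarrow> f x \<in> {..n}) \<and> (x \<notin> {..<m} \<longrightarrow> f x = 0)}"
  proof
    fix f assume f: "f \<in> SR_verts m n"
    { fix x assume "x < m"
      then have "f x \<le> (\<Sum>i<m. f i)" by (intro member_le_sum) auto
      with f have "f x \<le> n" by (simp add: SR_verts_def) }
    with f show "f \<in> {f. \<forall>x. (x \<in> {..<m} \<longrightarrow> f x \<in> {..n}) \<and> (x \<notin> {..<m} \<longrightarrow> f x = 0)}"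
      by (auto simp: SR_verts_def)
  qed
  moreover have "finite {f. \<forall>x. (x \<in> {..<m} \<longrightarrow> f x \<in> {..n}) \<and> (x \<notin> {..<m} \<longrightarrow> (f::nat\<Rightarrow>nat) x = 0)}"
    by (rule finite_set_of_finite_funs) auto
  ultimately show ?thesis by (rule finite_subset)
qed

lemma finite_nbrs: "finite (SR_nbrs m n u)"
  using finite_SR_verts unfolding SR_nbrs_def by auto

lemma extend_clique:
  assumes fin: "finite S" and K: "is_clique_in E S K"
  shows "\<exists>M. is_max_clique_in E S M \<and> K \<subseteq> M"
proof -
  let ?F = "{D. is_clique_in E S D \<and> K \<subseteq> D}"
  have finF: "finite ?F" by (rule finite_subset[of _ "Pow S"]) (use fin in \<open>auto simp: is_clique_in_def\<close>)
  have "K \<in> ?F" using K by auto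
  then have ne: "card ` ?F \<noteq> {}" by auto
  have "Max (card ` ?F) \<in> card ` ?F" using finF ne by (intro Max_in) auto
  then obtain D where D: "D \<in> ?F" "card D = Max (card ` ?F)" by auto
  have finD: "finite D" using D fin by (auto simp: is_clique_in_def intro: finite_subset)
  have "is_max_clique_in E S D"
    unfolding is_max_clique_in_def
  proof (intro conjI allI impI)
    show "is_clique_in E S D" using D by auto
    fix D' assume H: "is_clique_in E S D' \<and> D \<subseteq> D'"
    then have "D' \<in> ?F" using D by auto
    then have "card D' \<le> card D" using D finF by auto
    moreover have "finite D'" using H fin by (auto simp: is_clique_in_def intro: finite_subset)
    ultimately show "D' = D" using H card_subset_eq[of D' D] card_mono[of D' D] by (metis card_seteq)
  qed
  then show ?thesis using D by auto
qed

lemma three_max: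
  fixes E :: "'a\<Rightarrow>'a\<Rightarrow>bool"
  assumes fin: "finite S" and sym: "\<And>a b. E a b \<Longrightarrow> E b a"
    and S: "v\<in>S" "x\<in>S" "y\<in>S" "z\<in>S" and e: "E v x" "E v y" "E v z"
    and d: "x\<noteq>y" "x\<noteq>z" "y\<noteq>z" "v \<noteq> x" "v\<noteq>y" "v\<noteq>z"
    and ne: "\<not>E x y" "\<not>E x z" "\<not>E y z"
  shows "card {C. is_max_clique_in E S C \<and> v \<in> C} \<ge> 3"
proof -
  have c: "is_clique_in E S {v,w}" if "w \<in> S" "E v w" for w
    using that S sym by (auto simp: is_clique_in_def)
  obtain M1 where M1: "is_max_clique_in E S M1" "{v,x} \<subseteq> M1" using extend_clique[OF fin c[OF S(2) e(1)]] by blast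
  obtain M2 where M2: "is_max_clique_in E S M2" "{v,y} \<subseteq> M2" using extend_clique[OF fin c[OF S(3) e(2)]] by blast
  obtain M3 where M3: "is_max_clique_in E S M3" "{v,z} \<subseteq> M3" using extend_clique[OF fin c[OF S(4) e(3)]] by blast
  have "M1 \<noteq> M2" using M1 M2 d ne by (auto simp: is_max_clique_in_def is_clique_in_def)
  moreover have "M1 \<noteq> M3" using M1 M3 d ne by (auto simp: is_max_clique_in_def is_clique_in_def)
  moreover have "M2 \<noteq> M3" using M3 M2 d ne by (auto simp: is_max_clique_in_def is_clique_in_def)
  ultimately have "card {M1,M2,M3} = 3" by auto
  moreover have "{M1,M2,M3} \<subseteq> {C. is_max_clique_in E S C \<and> v \<in> C}" using M1 M2 M3 by auto
  moreover have "finite {C. is_max_clique_in E S C \<and> v \<in> C}"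
    by (rule finite_subset[of _ "Pow S"]) (use fin in \<open>auto simp: is_max_clique_in_def is_clique_in_def\<close>)
  ultimately show ?thesis by (metis card_mono)
qed

definition ev :: "nat \<Rightarrow> nat \<Rightarrow> nat \<Rightarrow> nat \<Rightarrow> nat \<Rightarrow> nat" where
  "ev p n i a = (\<lambda>k. if k = p then n - a else if k = i then a else 0)"

lemma card_diff2: "{k. k < m \<and> x k \<noteq> y k} = {a,b} \<Longrightarrow> a \<noteq> b \<Longrightarrow> SR_adj m x y"
  by (simp add: SR_adj_def)

lemma sum_two:
  fixes m :: nat
  assumes "p < m" "i < m" "p \<noteq> i" "\<And>k. k < m \<Longrightarrow> k \<noteq> p \<Longrightarrow> k \<noteq> i \<Longrightarrow> f k = 0"
  shows "(\<Sum>k<m. f k) = f p + (f i :: nat)"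
proof -
  have "(\<Sum>k<m. f k) = (\<Sum>k\<in>{p,i}. f k)"
    apply (rule sum.mono_neutral_right)
    apply simp
    using assms by auto
  then show ?thesis using assms by simp
qed

lemma ev_nbr:
  assumes "p < m" "i < m" "i \<noteq> p" "1 \<le> a" "a \<le> n"
  shows "ev p n i a \<in> SR_nbrs m n (\<lambda>k. if k = p then n else 0)"
proof -
  have "(\<Sum>k<m. ev p n i a k) = ev p n i a p + ev p n i a i"
    by (rule sum_two) (use assms in \<open>auto simp: ev_def\<close>)
  then have "ev p n i a \<in> SR_verts m n" using assms by (auto simp: SR_verts_def ev_def)
  moreover have "SR_adj m (\<lambda>k. if k = p then n else 0) (ev p n i a)"
    by (rule card_diff2[of _ _ _ p i]) (use assms in \<open>auto simp: ev_def\<close>)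
  ultimately show ?thesis by (simp add: SR_nbrs_def)
qed

lemma nbr_ev:
  assumes p: "p < m" and w: "w \<in> SR_nbrs m n (\<lambda>k. if k = p then n else 0)"
  shows "\<exists>i a. i < m \<and> i \<noteq> p \<and> 1 \<le> a \<and> a \<le> n \<and> w = ev p n i a"
proof -
  let ?u = "\<lambda>k::nat. if k = p then n else 0"
  let ?D = "{k. k < m \<and> ?u k \<noteq> w k}"
  have wv: "\<forall>i\<ge>m. w i = 0" "(\<Sum>i<m. w i) = n" using w by (auto simp: SR_nbrs_def SR_verts_def)
  have c2: "card ?D = 2" using w by (auto simp: SR_nbrs_def SR_adj_def)
  then obtain a b where ab: "?D = {a,b}" "a \<noteq> b" by (auto simp: card_2_iff)
  have pD: "p \<in> ?D"
  proof (rule ccontr)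
    assume "p \<notin> ?D"
    then have wp: "w p = n" using p by auto
    have "(\<Sum>i<m. w i) = w p + (\<Sum>i\<in>{..<m}-{p}. w i)" using p by (intro sum.remove) auto
    then have "(\<Sum>i\<in>{..<m}-{p}. w i) = 0" using wv wp by simp
    then have "\<forall>i\<in>{..<m}-{p}. w i = 0" by simp
    then have "?D = {}" using wp by auto
    then show False using c2 by (metis card.empty zero_neq_numeral)
  qed
  have pab: "p \<in> {a,b}" using pD unfolding ab(1) .
  obtain i where i: "i \<noteq> p" "?D = {p,i}"
  proof (cases "a = p")
    case True
    have e: "?D = {p,b}" unfolding ab(1) True ..
    have "b \<noteq> p" using ab(2) True by simp
    from that[OF this e] show ?thesis .
  next
    case False then have bp: "b = p" using pab by blast
    have e: "?D = {p,a}" unfolding ab(1) bp by blast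
    from that[OF False e] show ?thesis .
  qed
  have iD: "i \<in> ?D" using i(2) by (simp only: insert_iff) simp
  have im: "i < m" using iD by simp
  have wi: "w i \<noteq> 0" using iD i(1) by simp
  have z: "w k = 0" if "k \<noteq> p" "k \<noteq> i" for k
  proof (cases "k < m")
    case True then have "k \<notin> ?D" using i that by auto
    then show ?thesis using True that by auto
  next
    case False then show ?thesis using wv by auto
  qed
  have "(\<Sum>k<m. w k) = w p + w i" by (rule sum_two) (use p im i z in auto)
  then have s: "w p + w i = n" using wv by simp
  have "w = ev p n i (w i)" unfolding ev_def using s z by (auto intro!: ext)
  then show ?thesis using im i(1) wi s by (intro exI[of _ i] exI[of _ "w i"]) auto
qed

lemma ev_adj:
  assumes "p < m" "i < m" "i' < m" "i \<noteq> p" "i' \<noteq> p" "1 \<le> a" "a \<le> n" "1 \<le> a'" "a' \<le> n"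
  shows "SR_adj m (ev p n i a) (ev p n i' a') \<longleftrightarrow> (i = i' \<and> a \<noteq> a') \<or> (i \<noteq> i' \<and> a = a')"
proof (cases "i = i'")
  case True
  show ?thesis
  proof (cases "a = a'")
    case True then show ?thesis using \<open>i = i'\<close> by (simp add: SR_adj_def)
  next
    case False
    have "{k. k < m \<and> ev p n i a k \<noteq> ev p n i' a' k} = {p,i}"
      using assms True False by (auto simp: ev_def)
    then show ?thesis using True False assms by (simp add: SR_adj_def)
  qed
next
  case False
  show ?thesis
  proof (cases "a = a'")
    case True
    have "{k. k < m \<and> ev p n i a k \<noteq> ev p n i' a' k} = {i,i'}"
      using assms True False by (auto simp: ev_def)
    then show ?thesis using True False assms by (simp add: SR_adj_def)
  next
    case F2: False
    have "{k. k < m \<and> ev p n i a k \<noteq> ev p n i' a' k} = {p,i,i'}"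
      using assms F2 False by (auto simp: ev_def)
    then show ?thesis using F2 False assms by (simp add: SR_adj_def)
  qed
qed

lemma ev_inj:
  assumes "ev p n i a = ev p n i' a'" "i \<noteq> p" "i' \<noteq> p" "1 \<le> a" "1 \<le> a'"
  shows "i = i' \<and> a = a'"
proof -
  have "ev p n i a i = ev p n i' a' i" using assms by simp
  then show ?thesis using assms by (auto simp: ev_def split: if_splits)
qed

lemma forward:
  assumes p: "p < m" and v: "v \<in> SR_nbrs m n (\<lambda>k. if k = p then n else 0)"
  shows "card {C. is_max_clique_in (SR_adj m) (SR_nbrs m n (\<lambda>k. if k = p then n else 0)) C \<and> v \<in> C} \<le> 2"
proof -
  let ?N = "SR_nbrs m n (\<lambda>k. if k = p then n else 0)"
  obtain i a where ia: "i < m" "i \<noteq> p" "1 \<le> a" "a \<le> n" "v = ev p n i a" using nbr_ev[OF p v] by blast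
  define Row where "Row = ev p n i ` {1..n}"
  define Col where "Col = (\<lambda>j. ev p n j a) ` {j. j < m \<and> j \<noteq> p}"
  have RowN: "Row \<subseteq> ?N" unfolding Row_def using ev_nbr[OF p ia(1,2)] by auto
  have ColN: "Col \<subseteq> ?N" unfolding Col_def using ev_nbr[OF p _ _ ia(3,4)] by auto
  have Rowc: "is_clique_in (SR_adj m) ?N Row"
    unfolding is_clique_in_def using RowN
    by (auto simp: Row_def ev_adj[OF p ia(1) ia(1) ia(2) ia(2)])
  have Colc: "is_clique_in (SR_adj m) ?N Col"
    unfolding is_clique_in_def using ColN
    by (auto simp: Col_def ev_adj[OF p _ _ _ _ ia(3,4) ia(3,4)])
  have sub: "C \<subseteq> Row \<or> C \<subseteq> Col" if C: "is_clique_in (SR_adj m) ?N C" "v \<in> C" for C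
  proof (rule ccontr)
    assume "\<not> (C \<subseteq> Row \<or> C \<subseteq> Col)"
    then obtain w1 w2 where w: "w1 \<in> C" "w1 \<notin> Row" "w2 \<in> C" "w2 \<notin> Col" by auto
    obtain j1 b1 where 1: "j1 < m" "j1 \<noteq> p" "1 \<le> b1" "b1 \<le> n" "w1 = ev p n j1 b1"
      using nbr_ev[OF p] w C by (auto simp: is_clique_in_def) blast
    obtain j2 b2 where 2: "j2 < m" "j2 \<noteq> p" "1 \<le> b2" "b2 \<le> n" "w2 = ev p n j2 b2"
      using nbr_ev[OF p] w C by (auto simp: is_clique_in_def) blast
    have "j1 \<noteq> i" using 1 w unfolding Row_def by auto
    moreover have "b2 \<noteq> a" using 2 w unfolding Col_def by auto
    moreover have "v \<noteq> w1" "v \<noteq> w2" using w ia \<open>j1 \<noteq> i\<close> unfolding Row_def Col_def by auto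
    ultimately have "SR_adj m v w1" "SR_adj m v w2" using C w by (auto simp: is_clique_in_def)
    then have "b1 = a" "j2 = i" using ev_adj[OF p ia(1) 1(1) ia(2) 1(2) ia(3,4) 1(3,4)]
       ev_adj[OF p ia(1) 2(1) ia(2) 2(2) ia(3,4) 2(3,4)] ia 1 2 \<open>j1 \<noteq> i\<close> \<open>b2 \<noteq> a\<close> by auto
    moreover have "w1 \<noteq> w2" using w Col_def 1 \<open>b1 = a\<close> by auto
    then have "SR_adj m w1 w2" using C w by (auto simp: is_clique_in_def)
    then show False using ev_adj[OF p 1(1) 2(1) 1(2) 2(2) 1(3,4) 2(3,4)] 1 2 \<open>j1 \<noteq> i\<close> \<open>b2 \<noteq> a\<close> \<open>b1 = a\<close> \<open>j2 = i\<close> by auto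
  qed
  have "{C. is_max_clique_in (SR_adj m) ?N C \<and> v \<in> C} \<subseteq> {Row, Col}"
  proof
    fix C assume "C \<in> {C. is_max_clique_in (SR_adj m) ?N C \<and> v \<in> C}"
    then have C: "is_max_clique_in (SR_adj m) ?N C" "v \<in> C" by auto
    then have "C \<subseteq> Row \<or> C \<subseteq> Col" using sub by (auto simp: is_max_clique_in_def)
    then show "C \<in> {Row, Col}" using C Rowc Colc unfolding is_max_clique_in_def by auto
  qed
  then have "card {C. is_max_clique_in (SR_adj m) ?N C \<and> v \<in> C} \<le> card {Row, Col}"
    by (rule card_mono[rotated]) simp
  also have "\<dots> \<le> 2" by (simp add: card_insert_if)
  finally show ?thesis .
qed

definition mv :: "(nat \<Rightarrow> nat) \<Rightarrow> nat \<Rightarrow> nat \<Rightarrow> nat \<Rightarrow> nat \<Rightarrow> nat" where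
  "mv u j i a = u(j := u j - a, i := u i + a)"

lemma SR_adj_sym: "SR_adj m x y \<Longrightarrow> SR_adj m y x"
proof -
  have "{i. i<m \<and> y i \<noteq> x i} = {i. i<m \<and> x i \<noteq> y i}" by auto
  then show "SR_adj m x y \<Longrightarrow> SR_adj m y x" unfolding SR_adj_def by simp
qed

lemma sum_rm2:
  fixes m :: nat and f :: "nat \<Rightarrow> nat"
  assumes "i < m" "j < m" "i \<noteq> j"
  shows "(\<Sum>k<m. f k) = f j + f i + (\<Sum>k\<in>{..<m}-{j}-{i}. f k)"
proof -
  have "(\<Sum>k<m. f k) = f j + (\<Sum>k\<in>{..<m}-{j}. f k)" using assms by (intro sum.remove) auto
  moreover have "(\<Sum>k\<in>{..<m}-{j}. f k) = f i + (\<Sum>k\<in>{..<m}-{j}-{i}. f k)" using assms by (intro sum.remove) auto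
  ultimately show ?thesis by simp
qed

lemma mv_nbr:
  assumes u: "u \<in> SR_verts m n" and "i < m" "j < m" "i \<noteq> j" "1 \<le> a" "a \<le> u j"
  shows "mv u j i a \<in> SR_nbrs m n u"
proof -
  have "(\<Sum>k<m. mv u j i a k) = mv u j i a j + mv u j i a i + (\<Sum>k\<in>{..<m}-{j}-{i}. mv u j i a k)"
    using assms by (intro sum_rm2) auto
  also have "(\<Sum>k\<in>{..<m}-{j}-{i}. mv u j i a k) = (\<Sum>k\<in>{..<m}-{j}-{i}. u k)"
    by (rule sum.cong) (auto simp: mv_def)
  also have "mv u j i a j + mv u j i a i = u j + u i" using assms by (simp add: mv_def)
  also have "u j + u i + (\<Sum>k\<in>{..<m}-{j}-{i}. u k) = (\<Sum>k<m. u k)"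
    using assms by (intro sum_rm2[symmetric]) auto
  finally have "mv u j i a \<in> SR_verts m n" using u assms by (auto simp: SR_verts_def mv_def)
  moreover have "SR_adj m u (mv u j i a)"
    by (rule card_diff2[of _ _ _ i j]) (use assms in \<open>auto simp: mv_def\<close>)
  ultimately show ?thesis by (simp add: SR_nbrs_def)
qed

lemma adj2: "{k. k < m \<and> x k \<noteq> y k} = {a,b} \<Longrightarrow> a \<noteq> b \<Longrightarrow> SR_adj m x y \<and> x \<noteq> y"
  by (auto simp: SR_adj_def)

lemma nadj3: "{k. k < m \<and> x k \<noteq> y k} = {a,b,c} \<Longrightarrow> a \<noteq> b \<Longrightarrow> a \<noteq> c \<Longrightarrow> b \<noteq> c
   \<Longrightarrow> \<not> SR_adj m x y \<and> x \<noteq> y"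
  by (auto simp: SR_adj_def)

lemma core:
  assumes fin: "v \<in> SR_nbrs m n u" "x \<in> SR_nbrs m n u" "y \<in> SR_nbrs m n u" "z \<in> SR_nbrs m n u"
   and a1: "SR_adj m v x \<and> v \<noteq> x" and a2: "SR_adj m v y \<and> v \<noteq> y" and a3: "SR_adj m v z \<and> v \<noteq> z"
   and b1: "\<not> SR_adj m x y \<and> x \<noteq> y" and b2: "\<not> SR_adj m x z \<and> x \<noteq> z" and b3: "\<not> SR_adj m y z \<and> y \<noteq> z"
  shows "\<exists>v \<in> SR_nbrs m n u. \<not> card {C. is_max_clique_in (SR_adj m) (SR_nbrs m n u) C \<and> v \<in> C} \<le> 2"
proof -
  have "card {C. is_max_clique_in (SR_adj m) (SR_nbrs m n u) C \<and> v \<in> C} \<ge> 3"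
    by (rule three_max[OF finite_nbrs, where E="SR_adj m" and v=v and x=x and y=y and z=z]) (use assms SR_adj_sym in auto)
  then show ?thesis using fin by force
qed

lemma coreA:
  assumes u: "u \<in> SR_verts m n" and d: "i < m" "j < m" "l < m" "i \<noteq> j" "i \<noteq> l" "j \<noteq> l"
    and s: "u i \<ge> 1" "u j \<ge> 1" "u l \<ge> 1"
  shows "\<exists>v \<in> SR_nbrs m n u. \<not> card {C. is_max_clique_in (SR_adj m) (SR_nbrs m n u) C \<and> v \<in> C} \<le> 2"
proof (rule core)
  show "mv u j i 1 \<in> SR_nbrs m n u" by (rule mv_nbr) (use assms in auto)
  show "mv u j l 1 \<in> SR_nbrs m n u" by (rule mv_nbr) (use assms in auto)
  show "mv u l i 1 \<in> SR_nbrs m n u" by (rule mv_nbr) (use assms in auto)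
  show "mv u i j 1 \<in> SR_nbrs m n u" by (rule mv_nbr) (use assms in auto)
  show "SR_adj m (mv u j i 1) (mv u j l 1) \<and> mv u j i 1 \<noteq> mv u j l 1"
    by (rule adj2[of _ _ _ i l]) (use assms in \<open>auto simp: mv_def\<close>)
  show "SR_adj m (mv u j i 1) (mv u l i 1) \<and> mv u j i 1 \<noteq> mv u l i 1"
    by (rule adj2[of _ _ _ j l]) (use assms in \<open>auto simp: mv_def\<close>)
  show "SR_adj m (mv u j i 1) (mv u i j 1) \<and> mv u j i 1 \<noteq> mv u i j 1"
    by (rule adj2[of _ _ _ i j]) (use assms in \<open>auto simp: mv_def\<close>)
  show "\<not> SR_adj m (mv u j l 1) (mv u l i 1) \<and> mv u j l 1 \<noteq> mv u l i 1"
    by (rule nadj3[of _ _ _ i j l]) (use assms in \<open>auto simp: mv_def\<close>)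
  show "\<not> SR_adj m (mv u j l 1) (mv u i j 1) \<and> mv u j l 1 \<noteq> mv u i j 1"
    by (rule nadj3[of _ _ _ i j l]) (use assms in \<open>auto simp: mv_def\<close>)
  show "\<not> SR_adj m (mv u l i 1) (mv u i j 1) \<and> mv u l i 1 \<noteq> mv u i j 1"
    by (rule nadj3[of _ _ _ i j l]) (use assms in \<open>auto simp: mv_def\<close>)
qed

lemma coreB:
  assumes u: "u \<in> SR_verts m n" and d: "i < m" "j < m" "l < m" "i \<noteq> j" "i \<noteq> l" "j \<noteq> l"
    and s: "u j \<ge> 2" "u l \<ge> 1"
  shows "\<exists>v \<in> SR_nbrs m n u. \<not> card {C. is_max_clique_in (SR_adj m) (SR_nbrs m n u) C \<and> v \<in> C} \<le> 2"
proof (rule core)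
  show "mv u j i 1 \<in> SR_nbrs m n u" by (rule mv_nbr) (use assms in auto)
  show "mv u j l 1 \<in> SR_nbrs m n u" by (rule mv_nbr) (use assms in auto)
  show "mv u l i 1 \<in> SR_nbrs m n u" by (rule mv_nbr) (use assms in auto)
  show "mv u j i 2 \<in> SR_nbrs m n u" by (rule mv_nbr) (use assms in auto)
  show "SR_adj m (mv u j i 1) (mv u j l 1) \<and> mv u j i 1 \<noteq> mv u j l 1"
    by (rule adj2[of _ _ _ i l]) (use assms in \<open>auto simp: mv_def\<close>)
  show "SR_adj m (mv u j i 1) (mv u l i 1) \<and> mv u j i 1 \<noteq> mv u l i 1"
    by (rule adj2[of _ _ _ j l]) (use assms in \<open>auto simp: mv_def\<close>)
  show "SR_adj m (mv u j i 1) (mv u j i 2) \<and> mv u j i 1 \<noteq> mv u j i 2"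
    by (rule adj2[of _ _ _ i j]) (use assms in \<open>auto simp: mv_def\<close>)
  show "\<not> SR_adj m (mv u j l 1) (mv u l i 1) \<and> mv u j l 1 \<noteq> mv u l i 1"
    by (rule nadj3[of _ _ _ i j l]) (use assms in \<open>auto simp: mv_def\<close>)
  show "\<not> SR_adj m (mv u j l 1) (mv u j i 2) \<and> mv u j l 1 \<noteq> mv u j i 2"
    by (rule nadj3[of _ _ _ i j l]) (use assms in \<open>auto simp: mv_def\<close>)
  show "\<not> SR_adj m (mv u l i 1) (mv u j i 2) \<and> mv u l i 1 \<noteq> mv u j i 2"
    by (rule nadj3[of _ _ _ i j l]) (use assms in \<open>auto simp: mv_def\<close>)
qed

theorem lemma12:
  fixes m n :: nat and u :: "nat \<Rightarrow> nat"
  assumes "m \<ge> 3" and "n \<ge> 3" and "u \<in> SR_verts m n"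
  shows "(\<forall>v \<in> SR_nbrs m n u.
            card {C. is_max_clique_in (SR_adj m) (SR_nbrs m n u) C \<and> v \<in> C} \<le> 2)
         \<longleftrightarrow> card {i. i < m \<and> u i \<noteq> 0} = 1"
proof
  let ?S = "{i. i < m \<and> u i \<noteq> 0}"
  have uz: "\<forall>i\<ge>m. u i = 0" and us: "(\<Sum>i<m. u i) = n" using assms(3) by (auto simp: SR_verts_def)
  have finS: "finite ?S" by simp
  {
    assume c: "card ?S = 1"
    then obtain p where Sp: "?S = {p}" by (rule card_1_singletonE)
    have pm: "p < m" using Sp by blast
    have z: "u k = 0" if "k \<noteq> p" for k
    proof (cases "k < m")
      case True have "k \<notin> {p}" using that by simp
      then have "k \<notin> ?S" unfolding Sp .
      then show ?thesis using True by simp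
    next
      case False then show ?thesis using uz by simp
    qed
    have "(\<Sum>i<m. u i) = (\<Sum>i\<in>{p}. u i)"
      by (rule sum.mono_neutral_right) (use pm z in auto)
    then have "u p = n" using us by simp
    then have ueq: "u = (\<lambda>k. if k = p then n else 0)" using z by (intro ext) simp
    show "\<forall>v \<in> SR_nbrs m n u. card {C. is_max_clique_in (SR_adj m) (SR_nbrs m n u) C \<and> v \<in> C} \<le> 2"
      unfolding ueq using forward[OF pm] by blast
  }
  assume H: "\<forall>v \<in> SR_nbrs m n u. card {C. is_max_clique_in (SR_adj m) (SR_nbrs m n u) C \<and> v \<in> C} \<le> 2"
  show "card ?S = 1"
  proof (rule ccontr)
    assume c: "card ?S \<noteq> 1"
    have "?S \<noteq> {}"
    proof
      assume "?S = {}"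
      then have "\<forall>i<m. u i = 0" by auto
      then have "(\<Sum>i<m. u i) = 0" by simp
      then show False using us assms(2) by simp
    qed
    then obtain p where p: "p \<in> ?S" by blast
    have "?S \<noteq> {p}"
    proof
      assume "?S = {p}" then have "card ?S = 1" by simp
      then show False using c by simp
    qed
    then obtain q where q: "q \<in> ?S" "q \<noteq> p" using p by blast
    have ex: "\<exists>v \<in> SR_nbrs m n u. \<not> card {C. is_max_clique_in (SR_adj m) (SR_nbrs m n u) C \<and> v \<in> C} \<le> 2"
    proof (cases "\<exists>r \<in> ?S. r \<noteq> p \<and> r \<noteq> q")
      case True
      then obtain r where r: "r \<in> ?S" "r \<noteq> p" "r \<noteq> q" by blast
      show ?thesis by (rule coreA[OF assms(3), of p q r]) (use p q r in auto)
    next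
      case False
      have z: "u k = 0" if "k < m" "k \<noteq> p" "k \<noteq> q" for k
      proof (rule ccontr)
        assume "u k \<noteq> 0" then have "k \<in> ?S" using that by simp
        then show False using False that by blast
      qed
      have "(\<Sum>i<m. u i) = u p + u q" by (rule sum_two) (use p q z in auto)
      then have s: "u p + u q = n" using us by simp
      have "\<exists>i<3. i \<noteq> p \<and> i \<noteq> q" by presburger
      then obtain i where i0: "i < 3" "i \<noteq> p" "i \<noteq> q" by blast
      have i: "i < m" "i \<noteq> p" "i \<noteq> q" using i0 assms(1) by linarith+
      show ?thesis
      proof (cases "u p \<ge> 2")
        case True
        show ?thesis by (rule coreB[OF assms(3), of i p q]) (use p q i True in auto)
      next
        case False
        then have uq: "u q \<ge> 2" using s assms(2) by simp
        show ?thesis by (rule coreB[OF assms(3), of i q p]) (use p q i uq in auto)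
      qed
    qed
    then show False using H by blast
  qed
qed

end
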